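(* The At-least-1 objective is UB-proof against a manipulator $m^-$ (one who can only remove edges) over both directed and undirected networks. That is, for every $k$, every (directed or undirected) social network $G$, every agent $m$ and every manipulation in which $m$ removes some of his edges (yielding $G^m$), we have \[\max_{P\in O(G^m)} u(m,P)\le\max_{P\in O(G)} u(m,P),\] where $O(\cdot)$ is the set of At-least-1 solutions, $u(m,P)$ is computed in the true network $G$, and the maximum over an empty solution set is taken to be $0$.
   Context: Let $A=\{a_1,\dots,a_n\}$ be a finite nonempty set of agents and $G=\langle A,E\rangle$ a directed or undirected graph without self-loops (the social network); $N(a)$ is the set of (out-)neighbours of $a$. For a coalition $C\subseteq A$ with $a\in C$, $u(a,C)=|C\cap N(a)|$. For $0<k\le n$, $\Pi_k$ is the set of partitions of $A$ into exactly $k$ nonempty coalitions; for $P\in\Pi_k$, $u(a,P)=u(a,C)$ where $C\in P$ contains $a$. The At-least-1 objective: $O(G)$ is the set of all $P\in\Pi_k$ such that every agent has utility at least $1$ (utilities computed in the network in question); if none exists, $O(G)=\emptyset$ and all agents are considered to have utility $0$. A manipulator $m$ of type $m^-$ may remove edges: in a directed network only outgoing edges $(m,a)\in E$; in an undirected network any edges incident to $m$. The reported network is $G^m$. The utility $u(m,P)$ of the manipulator is always computed with respect to his true neighbours in the original $G$. *)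

theory Defs
  imports Main
begin

text \<open>An undirected network: additionally E is symmetric (an undirected edge {a,b} is
  represented by both (a,b) and (b,a)).\<close>

definition network :: "'a set \<Rightarrow> ('a \<times> 'a) set \<Rightarrow> bool" where
  "network A E \<longleftrightarrow> E \<subseteq> A \<times> A \<and> (\<forall>a. (a, a) \<notin> E)"

definition undirected_network :: "'a set \<Rightarrow> ('a \<times> 'a) set \<Rightarrow> bool" where
  "undirected_network A E \<longleftrightarrow> network A E \<and> sym E"

definition nbrs :: "('a \<times> 'a) set \<Rightarrow> 'a \<Rightarrow> 'a set" where
  "nbrs E a = {b. (a, b) \<in> E}"

definition util_coal :: "('a \<times> 'a) set \<Rightarrow> 'a \<Rightarrow> 'a set \<Rightarrow> nat" where
  "util_coal E a C = card (C \<inter> nbrs E a)"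

definition partitions_k :: "'a set \<Rightarrow> nat \<Rightarrow> 'a set set set" where
  "partitions_k A k = {P. \<Union>P = A \<and> {} \<notin> P \<and>
      (\<forall>C\<in>P. \<forall>D\<in>P. C \<noteq> D \<longrightarrow> C \<inter> D = {}) \<and> finite P \<and> card P = k}"

definition util :: "('a \<times> 'a) set \<Rightarrow> 'a \<Rightarrow> 'a set set \<Rightarrow> nat" where
  "util E a P = util_coal E a (THE C. C \<in> P \<and> a \<in> C)"

definition at_least_1 :: "'a set \<Rightarrow> ('a \<times> 'a) set \<Rightarrow> nat \<Rightarrow> 'a set set set" where
  "at_least_1 A E k = {P \<in> partitions_k A k. \<forall>a\<in>A. util E a P \<ge> 1}"

definition best_util :: "('a \<times> 'a) set \<Rightarrow> 'a \<Rightarrow> 'a set set set \<Rightarrow> nat" where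
  "best_util Etrue m Sol = (if Sol = {} then 0 else Max (util Etrue m ` Sol))"

definition removal_directed :: "('a \<times> 'a) set \<Rightarrow> 'a \<Rightarrow> ('a \<times> 'a) set \<Rightarrow> bool" where
  "removal_directed E m E' \<longleftrightarrow> E' \<subseteq> E \<and> (\<forall>(x, y)\<in>E - E'. x = m)"

definition removal_undirected :: "('a \<times> 'a) set \<Rightarrow> 'a \<Rightarrow> ('a \<times> 'a) set \<Rightarrow> bool" where
  "removal_undirected E m E' \<longleftrightarrow> E' \<subseteq> E \<and> sym E' \<and> (\<forall>(x, y)\<in>E - E'. x = m \<or> y = m)"

end

theory Submission
  imports Defs
begin

lemma nbrs_mono: "Em \<subseteq> E \<Longrightarrow> nbrs Em a \<subseteq> nbrs E a"
  unfolding nbrs_def by blast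

lemma nbrs_sub: "E \<subseteq> A \<times> A \<Longrightarrow> nbrs E a \<subseteq> A"
  unfolding nbrs_def by blast

lemma card_step:
  assumes "finite A" "E \<subseteq> A \<times> A" "Em \<subseteq> E" "1 \<le> card (C \<inter> nbrs Em a)"
  shows "1 \<le> card (C \<inter> nbrs E a)"
proof -
  have s: "C \<inter> nbrs Em a \<subseteq> C \<inter> nbrs E a" using nbrs_mono[OF assms(3)] by blast
  have f: "finite (C \<inter> nbrs E a)"
    using finite_subset[OF _ assms(1)] nbrs_sub[OF assms(2)] by blast
  have "card (C \<inter> nbrs Em a) \<le> card (C \<inter> nbrs E a)" by (rule card_mono[OF f s])
  thus ?thesis using assms(4) by (rule le_trans[rotated])
qed

lemma util_step:
  assumes "finite A" "E \<subseteq> A \<times> A" "Em \<subseteq> E" "1 \<le> util Em a P"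
  shows "1 \<le> util E a P"
  using card_step[OF assms(1-3)] assms(4) unfolding util_def util_coal_def by blast

lemma sub_sol:
  assumes "finite A" "E \<subseteq> A \<times> A" "Em \<subseteq> E"
  shows "at_least_1 A Em k \<subseteq> at_least_1 A E k"
  unfolding at_least_1_def using util_step[OF assms] by blast

lemma fin_sol:
  assumes "finite A"
  shows "finite (at_least_1 A E k)"
proof -
  have "at_least_1 A E k \<subseteq> Pow (Pow A)" unfolding at_least_1_def partitions_k_def by blast
  thus ?thesis using assms by (meson finite_Pow_iff finite_subset)
qed

lemma best_mono:
  assumes "S \<subseteq> T" "finite T"
  shows "best_util E m S \<le> best_util E m T"
proof (cases "S = {}")
  case True thus ?thesis by (simp add: best_util_def)
next
  case False
  hence "T \<noteq> {}" using assms(1) by blast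
  have "Max (util E m ` S) \<le> Max (util E m ` T)"
    using False assms by (intro Max_mono) (simp_all add: image_mono)
  thus ?thesis using False \<open>T \<noteq> {}\<close> by (simp add: best_util_def)
qed

lemma main:
  assumes "finite A" "E \<subseteq> A \<times> A" "Em \<subseteq> E"
  shows "best_util E m (at_least_1 A Em k) \<le> best_util E m (at_least_1 A E k)"
  by (rule best_mono[OF sub_sol[OF assms] fin_sol[OF assms(1)]])

theorem theorem4:
  fixes A :: "'a set" and E Em :: "('a \<times> 'a) set" and m :: 'a and k :: nat
  assumes "finite A" and "A \<noteq> {}" and "0 < k" and "k \<le> card A" and "m \<in> A"
  shows "(network A E \<and> removal_directed E m Em
            \<longrightarrow> best_util E m (at_least_1 A Em k) \<le> best_util E m (at_least_1 A E k))
       \<and> (undirected_network A E \<and> removal_undirected E m Em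
            \<longrightarrow> best_util E m (at_least_1 A Em k) \<le> best_util E m (at_least_1 A E k))"
proof -
  have d: "best_util E m (at_least_1 A Em k) \<le> best_util E m (at_least_1 A E k)"
    if "network A E \<and> removal_directed E m Em"
  proof -
    from that have e1: "E \<subseteq> A \<times> A" and e2: "Em \<subseteq> E"
      unfolding network_def removal_directed_def by auto
    show ?thesis using main[OF assms(1) e1 e2] .
  qed
  have u: "best_util E m (at_least_1 A Em k) \<le> best_util E m (at_least_1 A E k)"
    if "undirected_network A E \<and> removal_undirected E m Em"
  proof -
    from that have e1: "E \<subseteq> A \<times> A" and e2: "Em \<subseteq> E"
      unfolding undirected_network_def network_def removal_undirected_def by auto
    show ?thesis using main[OF assms(1) e1 e2] .
  qed
  show ?thesis using d u by blast
qed

end
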